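(* Let $(x,q)\in\mathbf J$ and suppose $q$ is not an integer. Then: (i) for each positive integer $m$ there exists a neighborhood $\mathbf W\subset\mathbb R^2$ of $(x,q)$ such that $b_1(y,r)\ldots b_m(y,r)\le b_1(x,q)\ldots b_m(x,q)$ (lexicographically) for all $(y,r)\in\mathbf W\cap\mathbf J$; (ii) if $(y_n,r_n)$ is a sequence in $\mathbf J$ converging to $(x,q)$ from above (i.e. $y_n\ge x$ and $r_n\ge q$ for all $n$), then the sequences $(b_i(y_n,r_n))_{i\ge1}$ converge coordinate-wise to $(b_i(x,q))_{i\ge1}$ as $n\to\infty$.
   Context: For real $q>1$ let $\lceil q\rceil$ be the smallest integer $\ge q$ and $A_q=\{0,\ldots,\lceil q\rceil-1\}$. Let $\mathbf J$ be the set of $(x,q)$ with $q>1$ and $x\in J_q:=[0,(\lceil q\rceil-1)/(q-1)]$. For $(x,q)\in\mathbf J$, the greedy expansion $(b_i(x,q))$ is defined recursively: $b_n(x,q)$ is the largest element of $A_q$ with $\sum_{i=1}^n b_i(x,q)q^{-i}\le x$. Finite words of equal length are compared lexicographically. *)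

theory Defs
  imports "HOL-Analysis.Analysis"
begin

definition JJ :: "(real \<times> real) set" where
  "JJ = {(x, q). q > 1 \<and> 0 \<le> x \<and> x \<le> (real_of_int \<lceil>q\<rceil> - 1) / (q - 1)}"

fun greedy_prefix :: "real \<Rightarrow> real \<Rightarrow> nat \<Rightarrow> nat list" where
  "greedy_prefix x q 0 = []"
| "greedy_prefix x q (Suc n) =
     (let w = greedy_prefix x q n;
          s = (\<Sum>i<n. real (w ! i) / q ^ (i + 1))
      in w @ [GREATEST d. d < nat \<lceil>q\<rceil> \<and> s + real d / q ^ (n + 1) \<le> x])"

definition greedy_digit :: "nat \<Rightarrow> real \<Rightarrow> real \<Rightarrow> nat" where
  "greedy_digit i x q = greedy_prefix x q i ! (i - 1)"

definition lex_le :: "nat list \<Rightarrow> nat list \<Rightarrow> bool" where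
  "lex_le u v \<longleftrightarrow> u = v \<or>
     (\<exists>k < min (length u) (length v). take k u = take k v \<and> u ! k < v ! k)"

end

theory Submission
  imports Defs
begin

definition dig :: "real \<Rightarrow> real \<Rightarrow> nat \<Rightarrow> nat" where
  "dig x q n = (GREATEST d. d < nat \<lceil>q\<rceil> \<and>
      (\<Sum>i<n. real (greedy_prefix x q n ! i) / q ^ (i + 1)) + real d / q ^ (n + 1) \<le> x)"

lemma gp_Suc: "greedy_prefix x q (Suc n) = greedy_prefix x q n @ [dig x q n]"
  by (simp add: Let_def dig_def)

lemma gp_len: "length (greedy_prefix x q n) = n"
  by (induction n) (simp_all del: greedy_prefix.simps(2) add: gp_Suc)

lemma gp_nth: "i < n \<Longrightarrow> greedy_prefix x q n ! i = dig x q i"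
proof (induction n)
  case 0 then show ?case by simp
next
  case (Suc n)
  then show ?case by (cases "i < n") (auto simp del: greedy_prefix.simps simp: gp_Suc nth_append gp_len less_Suc_eq)
qed

definition ps :: "real \<Rightarrow> real \<Rightarrow> nat \<Rightarrow> real" where
  "ps x q n = (\<Sum>i<n. real (dig x q i) / q ^ (i + 1))"

lemma dig_alt: "dig x q n = (GREATEST d. d < nat \<lceil>q\<rceil> \<and> ps x q n + real d / q ^ (n + 1) \<le> x)"
proof -
  have "(\<Sum>i<n. real (greedy_prefix x q n ! i) / q ^ (i + 1)) = ps x q n"
    unfolding ps_def by (rule sum.cong) (auto simp: gp_nth)
  then show ?thesis by (simp add: dig_def)
qed

lemma dig_props:
  assumes "q > 0" "ps x q n \<le> x"
  shows "dig x q n < nat \<lceil>q\<rceil>" "ps x q n + real (dig x q n) / q ^ (n + 1) \<le> x"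
    "\<And>d. d < nat \<lceil>q\<rceil> \<Longrightarrow> ps x q n + real d / q ^ (n + 1) \<le> x \<Longrightarrow> d \<le> dig x q n"
proof -
  let ?P = "\<lambda>d. d < nat \<lceil>q\<rceil> \<and> ps x q n + real d / q ^ (n + 1) \<le> x"
  have P0: "?P 0" using assms by simp
  have bd: "\<forall>y. ?P y \<longrightarrow> y \<le> nat \<lceil>q\<rceil>" by auto
  have "?P (Greatest ?P)" using GreatestI_nat[of ?P 0 "nat \<lceil>q\<rceil>"] P0 bd by blast
  then show "dig x q n < nat \<lceil>q\<rceil>" "ps x q n + real (dig x q n) / q ^ (n + 1) \<le> x"
    by (auto simp: dig_alt)
  fix d assume "d < nat \<lceil>q\<rceil>" "ps x q n + real d / q ^ (n + 1) \<le> x"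
  then show "d \<le> dig x q n" unfolding dig_alt by (intro Greatest_le_nat[of ?P d "nat \<lceil>q\<rceil>"]) auto
qed

lemma ps_Suc: "ps x q (Suc n) = ps x q n + real (dig x q n) / q ^ (n + 1)"
  by (simp add: ps_def)

lemma ps_le: "q > 0 \<Longrightarrow> 0 \<le> x \<Longrightarrow> ps x q n \<le> x"
proof (induction n)
  case 0 then show ?case by (simp add: ps_def)
next
  case (Suc n) then show ?case using dig_props(2)[of q x n] by (simp add: ps_Suc)
qed

lemma gd_eq: "greedy_digit (Suc k) x q = dig x q k"
  by (simp del: greedy_prefix.simps add: greedy_digit_def gp_nth)

lemma map_gd: "map (\<lambda>i. greedy_digit i y r) [1..<m+1] = map (dig y r) [0..<m]"
proof -
  have "[1..<m+1] = map Suc [0..<m]" by (simp add: map_Suc_upt)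
  then show ?thesis by (simp add: gd_eq)
qed

lemma lex_from:
  assumes "\<forall>k<m. (\<forall>i<k. f i = g i) \<longrightarrow> f k \<le> (g k :: nat)"
  shows "lex_le (map f [0..<m]) (map g [0..<m])"
proof (cases "\<forall>k<m. f k = g k")
  case True then show ?thesis unfolding lex_le_def by (auto intro: map_cong)
next
  case False
  define k where "k = (LEAST k. k < m \<and> f k \<noteq> g k)"
  have k: "k < m \<and> f k \<noteq> g k" using False unfolding k_def by (metis (mono_tags, lifting) LeastI)
  have lt: "\<forall>i<k. f i = g i" using k unfolding k_def
    by (metis (mono_tags, lifting) not_less_Least order.strict_trans)
  have "take k (map f [0..<m]) = take k (map g [0..<m])"
    using k lt by (simp add: take_map)
  moreover have "f k < g k" using assms k lt by (meson le_neq_implies_less)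
  ultimately show ?thesis unfolding lex_le_def using k by (auto simp: nth_map_upt)
qed

lemma eq_from:
  fixes m :: nat and f g :: "nat \<Rightarrow> nat"
  assumes "\<forall>k<m. (\<forall>i<k. f i = g i) \<longrightarrow> f k = (g k :: nat)"
  shows "\<forall>k<m. f k = g k"
proof -
  have "k < m \<longrightarrow> f k = g k" for k :: nat
    by (induction k rule: less_induct) (use assms in auto)
  then show ?thesis by auto
qed


lemma hk_id:
  fixes r y :: real and c :: "nat \<Rightarrow> real"
  assumes "r > 0"
  shows "(\<Sum>i<k. c i * r ^ (k - i)) + e - y * r ^ (k + 1)
       = r ^ (k + 1) * ((\<Sum>i<k. c i / r ^ (i + 1)) + e / r ^ (k + 1) - y)"
proof -
  have "r ^ (k + 1) * (\<Sum>i<k. c i / r ^ (i + 1)) = (\<Sum>i<k. c i * r ^ (k - i))"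
    unfolding sum_distrib_left
  proof (rule sum.cong)
    fix i assume "i \<in> {..<k}"
    then have "r ^ (k + 1) = r ^ (k - i) * r ^ (i + 1)"
      by (simp add: power_add[symmetric])
    then show "r ^ (k + 1) * (c i / r ^ (i + 1)) = c i * r ^ (k - i)"
      using assms by simp
  qed simp
  then show ?thesis using assms by (simp add: algebra_simps)
qed

lemma dig_mono:
  assumes "0 \<le> x" "x \<le> y" "1 < q" "q \<le> r" "\<lceil>r\<rceil> = \<lceil>q\<rceil>" "\<forall>i<k. dig y r i = dig x q i"
  shows "dig x q k \<le> dig y r k"
proof -
  have qp: "q > 0" "r > 0" using assms by auto
  have "ps y r k \<le> ps x q k" unfolding ps_def using assms(6)
  proof (intro sum_mono)
    fix i assume "i \<in> {..<k}"
    have "q ^ (i + 1) \<le> r ^ (i + 1)" by (rule power_mono) (use assms in auto)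
    then show "real (dig y r i) / r ^ (i + 1) \<le> real (dig x q i) / q ^ (i + 1)"
      using assms qp \<open>i \<in> {..<k}\<close> by (auto intro!: divide_left_mono)
  qed
  moreover have "q ^ (k + 1) \<le> r ^ (k + 1)" by (rule power_mono) (use assms in auto)
  then have "real (dig x q k) / r ^ (k + 1) \<le> real (dig x q k) / q ^ (k + 1)"
    using assms qp by (auto intro!: divide_left_mono)
  moreover have "ps x q k + real (dig x q k) / q ^ (k + 1) \<le> x"
    using dig_props(2)[OF qp(1) ps_le[OF qp(1) assms(1)]] .
  moreover have "dig x q k < nat \<lceil>r\<rceil>"
    using dig_props(1)[OF qp(1) ps_le[OF qp(1) assms(1)]] assms(5) by simp
  moreover have "0 \<le> y" using assms by simp
  ultimately have "ps y r k + real (dig x q k) / r ^ (k + 1) \<le> y" using assms(2) by linarith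
  then show ?thesis
    using dig_props(3)[where x=y and q=r and n=k, OF qp(2) ps_le[OF qp(2) \<open>0 \<le> y\<close>]
       \<open>dig x q k < nat \<lceil>r\<rceil>\<close>] by blast
qed

lemma ceil_eq:
  fixes q r :: real
  assumes "q \<notin> \<int>" "real_of_int \<lfloor>q\<rfloor> < r" "r < real_of_int \<lceil>q\<rceil>"
  shows "\<lceil>r\<rceil> = \<lceil>q\<rceil>"
proof -
  have "\<lceil>q\<rceil> = \<lfloor>q\<rfloor> + 1" using assms(1)
    by (metis Ints_of_int ceiling_altdef floor_correct floor_less_iff le_less of_int_floor_le)
  moreover have "\<lceil>r\<rceil> \<le> \<lceil>q\<rceil>" using assms(3) by (simp add: ceiling_le_iff)
  moreover have "\<lfloor>q\<rfloor> < \<lceil>r\<rceil>" using assms(2)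
    by (meson le_of_int_ceiling less_le_trans of_int_less_iff)
  ultimately show ?thesis by linarith
qed


lemma W_exists:
  assumes xq: "(x, q) \<in> JJ" and nq: "q \<notin> \<int>"
  shows "\<exists>W. open W \<and> (x, q) \<in> W \<and> (\<forall>y r. (y, r) \<in> W \<inter> JJ \<longrightarrow> \<lceil>r\<rceil> = \<lceil>q\<rceil> \<and>
            (\<forall>k<m. (\<forall>i<k. dig y r i = dig x q i) \<longrightarrow> dig y r k \<le> dig x q k))"
proof -
  have q1: "q > 1" and x0: "0 \<le> x" using xq by (auto simp: JJ_def)
  define h where "h k p = (\<Sum>i<k. real (dig x q i) * snd p ^ (k - i)) + (real (dig x q k) + 1)
       - fst p * snd p ^ (k + 1)" for k :: nat and p :: "real \<times> real"
  define K where "K = {k. k < m \<and> Suc (dig x q k) < nat \<lceil>q\<rceil>}"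
  define W where "W = {p. real_of_int \<lfloor>q\<rfloor> < snd p} \<inter> {p. snd p < real_of_int \<lceil>q\<rceil>}
      \<inter> (\<Inter>k\<in>K. {p. 0 < h k p})"
  have hid: "h k (y, r) = r ^ (k + 1) * ((\<Sum>i<k. real (dig x q i) / r ^ (i + 1))
        + (real (dig x q k) + 1) / r ^ (k + 1) - y)" if "r > 0" for k y r
    unfolding h_def using hk_id[OF that, of "\<lambda>i. real (dig x q i)" k "real (dig x q k) + 1" y] by simp
  have "open W" unfolding W_def h_def K_def
    by (intro open_Int open_INT finite_Collect_conjI ballI open_Collect_less continuous_intros) auto
  moreover have "(x, q) \<in> W"
  proof -
    have "real_of_int \<lfloor>q\<rfloor> < q" using nq
      by (metis Ints_of_int of_int_floor_le order_le_less)
    moreover have "q < real_of_int \<lceil>q\<rceil>" using nq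
      by (metis Ints_of_int le_of_int_ceiling order_le_less)
    moreover have "0 < h k (x, q)" if "k \<in> K" for k
    proof -
      have pl: "ps x q k \<le> x" using ps_le[of q x k] q1 x0 by simp
      have "\<not> (ps x q k + real (Suc (dig x q k)) / q ^ (k + 1) \<le> x)"
        using dig_props(3)[OF _ pl, of "Suc (dig x q k)"] q1 that unfolding K_def by auto
      then have "x < ps x q k + (real (dig x q k) + 1) / q ^ (k + 1)" by (simp add: add.commute)
      then show ?thesis using hid[of q k x] q1 unfolding ps_def by simp
    qed
    ultimately show ?thesis unfolding W_def by auto
  qed
  moreover have "\<lceil>r\<rceil> = \<lceil>q\<rceil> \<and>
            (\<forall>k<m. (\<forall>i<k. dig y r i = dig x q i) \<longrightarrow> dig y r k \<le> dig x q k)"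
    if yr: "(y, r) \<in> W \<inter> JJ" for y r
  proof -
    have r1: "r > 1" and y0: "0 \<le> y" using yr by (auto simp: JJ_def)
    have cr: "\<lceil>r\<rceil> = \<lceil>q\<rceil>" using yr ceil_eq[OF nq] unfolding W_def by auto
    have "dig y r k \<le> dig x q k" if k: "k < m" and eq: "\<forall>i<k. dig y r i = dig x q i" for k
    proof (rule ccontr)
      assume "\<not> dig y r k \<le> dig x q k"
      then have gt: "Suc (dig x q k) \<le> dig y r k" by simp
      have pl: "ps y r k \<le> y" using ps_le[of r y k] r1 y0 by simp
      have dl: "dig y r k < nat \<lceil>q\<rceil>" using dig_props(1)[OF _ pl] r1 cr by simp
      then have kK: "k \<in> K" unfolding K_def using k gt by simp
      have "ps y r k + real (dig y r k) / r ^ (k + 1) \<le> y" using dig_props(2)[OF _ pl] r1 by simp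
      moreover have "real (Suc (dig x q k)) / r ^ (k + 1) \<le> real (dig y r k) / r ^ (k + 1)"
        using gt r1 by (intro divide_right_mono) auto
      moreover have "ps y r k = (\<Sum>i<k. real (dig x q i) / r ^ (i + 1))"
        unfolding ps_def using eq by (intro sum.cong) auto
      ultimately have "(\<Sum>i<k. real (dig x q i) / r ^ (i + 1)) + (real (dig x q k) + 1) / r ^ (k + 1) \<le> y"
        by (simp add: add.commute)
      then have "h k (y, r) \<le> 0" using hid[of r k y] r1
        by (simp add: mult_nonneg_nonpos)
      moreover have "0 < h k (y, r)" using yr kK unfolding W_def by auto
      ultimately show False by simp
    qed
    then show ?thesis using cr by auto
  qed
  ultimately show ?thesis by blast
qed

theorem lemma2p5:
  fixes x q :: real
  assumes "(x, q) \<in> JJ" and "q \<notin> \<int>"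
  shows "(\<forall>m::nat. m > 0 \<longrightarrow>
           (\<exists>W. open W \<and> (x, q) \<in> W \<and>
              (\<forall>y r. (y, r) \<in> W \<inter> JJ \<longrightarrow>
                 lex_le (map (\<lambda>i. greedy_digit i y r) [1..<m+1])
                        (map (\<lambda>i. greedy_digit i x q) [1..<m+1]))))
       \<and> (\<forall>(ys :: nat \<Rightarrow> real) (rs :: nat \<Rightarrow> real).
            (\<forall>n. (ys n, rs n) \<in> JJ \<and> ys n \<ge> x \<and> rs n \<ge> q) \<and>
            (\<lambda>n. (ys n, rs n)) \<longlonglongrightarrow> (x, q) \<longrightarrow>
            (\<forall>i::nat. i \<ge> 1 \<longrightarrow>
               (\<lambda>n. greedy_digit i (ys n) (rs n)) \<longlonglongrightarrow> greedy_digit i x q))"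
proof (intro conjI allI impI)
  fix m :: nat assume "m > 0"
  obtain W where W: "open W" "(x, q) \<in> W" "\<And>y r. (y, r) \<in> W \<inter> JJ \<Longrightarrow> \<lceil>r\<rceil> = \<lceil>q\<rceil> \<and>
            (\<forall>k<m. (\<forall>i<k. dig y r i = dig x q i) \<longrightarrow> dig y r k \<le> dig x q k)"
    using W_exists[OF assms, of m] by blast
  show "\<exists>W. open W \<and> (x, q) \<in> W \<and>
              (\<forall>y r. (y, r) \<in> W \<inter> JJ \<longrightarrow>
                 lex_le (map (\<lambda>i. greedy_digit i y r) [1..<m+1])
                        (map (\<lambda>i. greedy_digit i x q) [1..<m+1]))"
  proof (intro exI[of _ W] conjI allI impI)
    fix y r assume "(y, r) \<in> W \<inter> JJ"
    then show "lex_le (map (\<lambda>i. greedy_digit i y r) [1..<m+1])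
                        (map (\<lambda>i. greedy_digit i x q) [1..<m+1])"
      unfolding map_gd using W(3)[of y r] by (intro lex_from) auto
  qed (use W in auto)
next
  fix ys rs :: "nat \<Rightarrow> real" and i :: nat
  assume A: "(\<forall>n. (ys n, rs n) \<in> JJ \<and> ys n \<ge> x \<and> rs n \<ge> q) \<and> (\<lambda>n. (ys n, rs n)) \<longlonglongrightarrow> (x, q)"
    and i: "1 \<le> i"
  have q1: "q > 1" and x0: "0 \<le> x" using assms(1) by (auto simp: JJ_def)
  obtain W where W: "open W" "(x, q) \<in> W" "\<And>y r. (y, r) \<in> W \<inter> JJ \<Longrightarrow> \<lceil>r\<rceil> = \<lceil>q\<rceil> \<and>
            (\<forall>k<i. (\<forall>j<k. dig y r j = dig x q j) \<longrightarrow> dig y r k \<le> dig x q k)"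
    using W_exists[OF assms, of i] by blast
  have ev: "eventually (\<lambda>n. (ys n, rs n) \<in> W) sequentially"
    using topological_tendstoD[OF conjunct2[OF A] W(1,2)] .
  have "eventually (\<lambda>n. greedy_digit i (ys n) (rs n) = greedy_digit i x q) sequentially"
    using ev
  proof eventually_elim
    case (elim n)
    have J: "(ys n, rs n) \<in> JJ" "x \<le> ys n" "q \<le> rs n" using A by auto
    from W(3)[of "ys n" "rs n"] elim J have c: "\<lceil>rs n\<rceil> = \<lceil>q\<rceil>"
      and le: "\<forall>k<i. (\<forall>j<k. dig (ys n) (rs n) j = dig x q j) \<longrightarrow> dig (ys n) (rs n) k \<le> dig x q k"
      by auto
    have "\<forall>k<i. (\<forall>j<k. dig (ys n) (rs n) j = dig x q j) \<longrightarrow> dig (ys n) (rs n) k = dig x q k"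
    proof (intro allI impI)
      fix k assume "k < i" "\<forall>j<k. dig (ys n) (rs n) j = dig x q j"
      then show "dig (ys n) (rs n) k = dig x q k"
        using le dig_mono[OF x0 J(2) q1 J(3) c, of k] by force
    qed
    then have "\<forall>k<i. dig (ys n) (rs n) k = dig x q k" by (rule eq_from)
    moreover obtain j where j: "i = Suc j" using i by (cases i) auto
    ultimately show ?case by (simp add: gd_eq)
  qed
  then show "(\<lambda>n. greedy_digit i (ys n) (rs n)) \<longlonglongrightarrow> greedy_digit i x q"
    by (rule tendsto_eventually)
qed

end
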